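(* Consider $n$ agents and $m$ indivisible items where each agent has a binary submodular valuation (notation as in the context). For any $\chi,\chi'\in\mathcal{SS}$ with profiles $(h_1,\dots,h_n)$ and $(h'_1,\dots,h'_n)$, we have $|h_i-h'_i|\le1$ for every agent $i\in[n]$; i.e. the Chebyshev distance between the profiles is at most $1$.
   Context: Agents $[n]$, items $[m]$. Each agent $i$ has a valuation $v_i:2^{[m]}\to\mathbb{R}_{\ge0}$ with $v_i(\emptyset)=0$ that is binary submodular: the marginal gain $\Delta_i(S;o)=v_i(S\cup\{o\})-v_i(S)$ lies in $\{0,1\}$ for all $S$ and $o$, and $\Delta_i(T;o)\le\Delta_i(S;o)$ whenever $S\subseteq T\subseteq[m]$, $o\notin T$. An allocation $\chi=(\chi_1,\dots,\chi_n)$ is a tuple of pairwise disjoint subsets of $[m]$; bundle $\chi_i$ is clean if $\Delta_i(\chi_i\setminus\{o\};o)=1$ for every $o\in\chi_i$ (equivalently $v_i(\chi_i)=|\chi_i|$); $\chi$ is clean if all bundles are clean; $\chi$ is max-USW if it maximizes $\sum_i v_i(\chi_i)$ among all allocations. The profile is $(h_1,\dots,h_n)$ with $h_i=|\chi_i|$. A criterion is a function $f$ from profiles to $\mathbb{R}$ (lower is better), symmetric if invariant under permuting coordinates; $f$ is strongly Pigou–Dalton if $f(\mathbf{q})<f(\mathbf{p})$ whenever there are $j,k$ with $p_j<p_k$, $q_j,q_k\in(p_j,p_k)$ and $q_i=p_i$ for $i\notin\{j,k\}$. $\mathcal{SS}$ denotes the set of clean max-USW allocations that minimize $f$ of the profile,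 among all clean max-USW allocations, for every symmetric strongly Pigou–Dalton criterion $f$. *)

theory Defs
  imports Complex_Main "HOL-Library.Multiset"
begin

text \<open>Agents are 0,...,n-1; items are 0,...,m-1. A valuation profile is
  v :: nat => nat set => real, where v i is the valuation of agent i on subsets of items.\<close>

definition marg :: "(nat set \<Rightarrow> real) \<Rightarrow> nat set \<Rightarrow> nat \<Rightarrow> real" where
  "marg vi S x = vi (S \<union> {x}) - vi S"

definition binary_submodular :: "nat \<Rightarrow> (nat set \<Rightarrow> real) \<Rightarrow> bool" where
  "binary_submodular m vi \<longleftrightarrow>
     vi {} = 0 \<and>
     (\<forall>S. S \<subseteq> {..<m} \<longrightarrow> vi S \<ge> 0) \<and>
     (\<forall>S x. S \<subseteq> {..<m} \<and> x \<in> {..<m} \<longrightarrow> marg vi S x \<in> {0, 1}) \<and>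
     (\<forall>S T x. S \<subseteq> T \<and> T \<subseteq> {..<m} \<and> x \<in> {..<m} \<and> x \<notin> T
        \<longrightarrow> marg vi T x \<le> marg vi S x)"

definition allocation :: "nat \<Rightarrow> nat \<Rightarrow> (nat \<Rightarrow> nat set) \<Rightarrow> bool" where
  "allocation n m \<chi> \<longleftrightarrow>
     (\<forall>i<n. \<chi> i \<subseteq> {..<m}) \<and>
     (\<forall>i<n. \<forall>j<n. i \<noteq> j \<longrightarrow> \<chi> i \<inter> \<chi> j = {})"

definition clean_bundle :: "(nat set \<Rightarrow> real) \<Rightarrow> nat set \<Rightarrow> bool" where
  "clean_bundle vi B \<longleftrightarrow> (\<forall>x\<in>B. marg vi (B - {x}) x = 1)"

definition clean :: "nat \<Rightarrow> (nat \<Rightarrow> nat set \<Rightarrow> real) \<Rightarrow> (nat \<Rightarrow> nat set) \<Rightarrow> bool" where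
  "clean n v \<chi> \<longleftrightarrow> (\<forall>i<n. clean_bundle (v i) (\<chi> i))"

definition usw :: "nat \<Rightarrow> (nat \<Rightarrow> nat set \<Rightarrow> real) \<Rightarrow> (nat \<Rightarrow> nat set) \<Rightarrow> real" where
  "usw n v \<chi> = (\<Sum>i<n. v i (\<chi> i))"

definition max_usw :: "nat \<Rightarrow> nat \<Rightarrow> (nat \<Rightarrow> nat set \<Rightarrow> real) \<Rightarrow> (nat \<Rightarrow> nat set) \<Rightarrow> bool" where
  "max_usw n m v \<chi> \<longleftrightarrow> allocation n m \<chi> \<and>
     (\<forall>\<chi>'. allocation n m \<chi>' \<longrightarrow> usw n v \<chi>' \<le> usw n v \<chi>)"

definition profile :: "nat \<Rightarrow> (nat \<Rightarrow> nat set) \<Rightarrow> nat list" where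
  "profile n \<chi> = map (\<lambda>i. card (\<chi> i)) [0..<n]"

text \<open>Criteria: functions from profiles (lists of length n) to reals, lower is better.\<close>
definition symmetric_crit :: "nat \<Rightarrow> (nat list \<Rightarrow> real) \<Rightarrow> bool" where
  "symmetric_crit n f \<longleftrightarrow>
     (\<forall>p q. length p = n \<and> length q = n \<and> mset p = mset q \<longrightarrow> f p = f q)"

definition strongly_PD :: "nat \<Rightarrow> (nat list \<Rightarrow> real) \<Rightarrow> bool" where
  "strongly_PD n f \<longleftrightarrow>
     (\<forall>p q j k. length p = n \<and> length q = n \<and> j < n \<and> k < n \<and>
        p ! j < p ! k \<and>
        p ! j < q ! j \<and> q ! j < p ! k \<and>
        p ! j < q ! k \<and> q ! k < p ! k \<and>
        (\<forall>i<n. i \<noteq> j \<and> i \<noteq> k \<longrightarrow> q ! i = p ! i)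
        \<longrightarrow> f q < f p)"

definition clean_max_usw :: "nat \<Rightarrow> nat \<Rightarrow> (nat \<Rightarrow> nat set \<Rightarrow> real) \<Rightarrow> (nat \<Rightarrow> nat set) \<Rightarrow> bool" where
  "clean_max_usw n m v \<chi> \<longleftrightarrow> max_usw n m v \<chi> \<and> clean n v \<chi>"

definition SS :: "nat \<Rightarrow> nat \<Rightarrow> (nat \<Rightarrow> nat set \<Rightarrow> real) \<Rightarrow> (nat \<Rightarrow> nat set) set" where
  "SS n m v = {\<chi>. clean_max_usw n m v \<chi> \<and>
     (\<forall>f. symmetric_crit n f \<and> strongly_PD n f \<longrightarrow>
        (\<forall>\<chi>'. clean_max_usw n m v \<chi>' \<longrightarrow> f (profile n \<chi>) \<le> f (profile n \<chi>')))}"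

end

theory Submission
  imports Defs
begin


context
  fixes m :: nat and vi :: "nat set \<Rightarrow> real"
  assumes bs: "binary_submodular m vi"
begin

lemma marg01: "S \<subseteq> {..<m} \<Longrightarrow> x < m \<Longrightarrow> marg vi S x = 0 \<or> marg vi S x = 1"
  using bs unfolding binary_submodular_def by auto

lemma submod: "S \<subseteq> T \<Longrightarrow> T \<subseteq> {..<m} \<Longrightarrow> x < m \<Longrightarrow> x \<notin> T \<Longrightarrow> marg vi T x \<le> marg vi S x"
  using bs unfolding binary_submodular_def by auto

lemma vempty: "vi {} = 0"
  using bs unfolding binary_submodular_def by auto

lemma val_insert: "vi (insert x S) = vi S + marg vi S x"
  unfolding marg_def by simp

lemma val_le_card: "finite S \<Longrightarrow> S \<subseteq> {..<m} \<Longrightarrow> vi S \<le> card S"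
proof (induction S rule: finite_induct)
  case empty then show ?case by (simp add: vempty)
next
  case (insert x F)
  have "marg vi F x \<le> 1" using marg01[of F x] insert by auto
  then show ?case using insert by (simp add: val_insert)
qed

lemma mono_un: "finite C \<Longrightarrow> S \<union> C \<subseteq> {..<m} \<Longrightarrow> vi S \<le> vi (S \<union> C)"
proof (induction C rule: finite_induct)
  case empty then show ?case by simp
next
  case (insert x F)
  have "marg vi (S \<union> F) x \<ge> 0" using marg01[of "S \<union> F" x] insert by auto
  moreover have "S \<union> insert x F = insert x (S \<union> F)" by auto
  ultimately show ?case using insert by (simp add: val_insert)
qed

lemma hered: "clean_bundle vi B \<Longrightarrow> B \<subseteq> {..<m} \<Longrightarrow> A \<subseteq> B \<Longrightarrow> clean_bundle vi A"
  unfolding clean_bundle_def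
proof
  fix x assume c: "\<forall>x\<in>B. marg vi (B - {x}) x = 1" and B: "B \<subseteq> {..<m}" and AB: "A \<subseteq> B" and x: "x \<in> A"
  have "marg vi (B - {x}) x \<le> marg vi (A - {x}) x"
    by (rule submod) (use AB B x in auto)
  moreover have "marg vi (A - {x}) x = 0 \<or> marg vi (A - {x}) x = 1"
    by (rule marg01) (use AB B x in auto)
  ultimately show "marg vi (A - {x}) x = 1" using c x AB by fastforce
qed

lemma clean_val_aux: "finite B \<Longrightarrow> B \<subseteq> {..<m} \<Longrightarrow> clean_bundle vi B \<Longrightarrow> vi B = card B"
proof (induction B rule: finite_induct)
  case empty then show ?case by (simp add: vempty)
next
  case (insert x F)
  have cF: "clean_bundle vi F" using hered[OF insert(5) insert(4)] by blast
  have vF: "vi F = card F" using insert.IH insert(4) cF by blast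
  have "insert x F - {x} = F" using insert(2) by blast
  then have "marg vi F x = 1" using insert(5) unfolding clean_bundle_def by force
  then show ?case using vF val_insert[of x F] insert(1,2) by simp
qed

lemma clean_val: "B \<subseteq> {..<m} \<Longrightarrow> clean_bundle vi B \<Longrightarrow> vi B = card B"
  using clean_val_aux finite_subset[of B "{..<m}"] by blast

lemma val_clean: "B \<subseteq> {..<m} \<Longrightarrow> vi B = card B \<Longrightarrow> clean_bundle vi B"
  unfolding clean_bundle_def
proof
  fix x assume B: "B \<subseteq> {..<m}" and v: "vi B = card B" and x: "x \<in> B"
  have fin: "finite B" using B finite_subset by blast
  have "B = insert x (B - {x})" using x by auto
  then have "vi B = vi (B - {x}) + marg vi (B - {x}) x" by (metis val_insert)
  moreover have "vi (B - {x}) \<le> card (B - {x})" using val_le_card[of "B - {x}"] fin B by auto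
  moreover have "card (B - {x}) = card B - 1" using x fin by simp
  moreover have "card B \<ge> 1" using x fin card_0_eq by fastforce
  moreover have "marg vi (B - {x}) x = 0 \<or> marg vi (B - {x}) x = 1" using marg01[of "B - {x}" x] B x by auto
  ultimately show "marg vi (B - {x}) x = 1" using v by (auto simp: of_nat_diff)
qed

lemma augment:
  assumes cA: "clean_bundle vi A" and cB: "clean_bundle vi B"
    and A: "A \<subseteq> {..<m}" and B: "B \<subseteq> {..<m}" and lt: "card A < card B"
  shows "\<exists>y\<in>B - A. clean_bundle vi (insert y A)"
proof (rule ccontr)
  assume na: "\<not> ?thesis"
  have finA: "finite A" using A finite_subset by blast
  have finB: "finite B" using B finite_subset by blast
  have z: "marg vi A y = 0" if y: "y \<in> B - A" for y
  proof -
    have "marg vi A y = 0 \<or> marg vi A y = 1" using marg01[of A y] A B y by auto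
    moreover have "marg vi A y \<noteq> 1"
    proof
      assume "marg vi A y = 1"
      then have "vi (insert y A) = card (insert y A)"
        using val_insert[of y A] clean_val[OF A cA] y finA by simp
      then have "clean_bundle vi (insert y A)" using val_clean[of "insert y A"] A B y by auto
      then show False using na y by auto
    qed
    ultimately show ?thesis by auto
  qed
  have key: "finite C \<Longrightarrow> C \<subseteq> B - A \<Longrightarrow> vi (A \<union> C) = vi A" for C
  proof (induction C rule: finite_induct)
    case empty then show ?case by simp
  next
    case (insert x F)
    have "marg vi (A \<union> F) x \<le> marg vi A x"
      by (rule submod) (use insert A B in auto)
    moreover have "marg vi (A \<union> F) x \<ge> 0"
    proof -
      have "A \<union> F \<subseteq> {..<m}" using insert A B by blast
      moreover have "x < m" using insert B by blast
      ultimately show ?thesis using marg01[of "A \<union> F" x] by auto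
    qed
    moreover have "marg vi A x = 0" using z insert(2,4) by blast
    moreover have "A \<union> insert x F = insert x (A \<union> F)" by auto
    ultimately show ?case using insert by (simp add: val_insert)
  qed
  have "vi (A \<union> (B - A)) = vi A" using key[of "B - A"] finB by blast
  moreover have "A \<union> (B - A) = B \<union> A" by auto
  moreover have "vi B \<le> vi (B \<union> A)" using mono_un[of A B] finA A B by auto
  ultimately show False using clean_val[OF A cA] clean_val[OF B cB] lt by simp
qed

end



definition dl :: "nat \<Rightarrow> nat \<Rightarrow> int" where "dl k a = (if a = k then 1 else 0)"

definition dist_alloc :: "nat \<Rightarrow> (nat \<Rightarrow> nat set) \<Rightarrow> (nat \<Rightarrow> nat set) \<Rightarrow> nat" where
  "dist_alloc n X Y = (\<Sum>a<n. card (X a - Y a))"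


context
  fixes n m :: nat and v :: "nat \<Rightarrow> nat set \<Rightarrow> real"
  assumes bsv: "\<forall>i<n. binary_submodular m (v i)"
begin

lemma usw_clean:
  assumes "allocation n m X" "clean n v X"
  shows "usw n v X = (\<Sum>a<n. real (card (X a)))"
  unfolding usw_def
proof (rule sum.cong)
  fix a assume "a \<in> {..<n}"
  then show "v a (X a) = real (card (X a))"
    using clean_val[of m "v a" "X a"] bsv assms unfolding allocation_def clean_def by auto
qed simp

lemma cm_sum:
  assumes "clean_max_usw n m v X" "clean_max_usw n m v Y"
  shows "(\<Sum>a<n. card (X a)) = (\<Sum>a<n. card (Y a))"
proof -
  have "usw n v X = usw n v Y" using assms unfolding clean_max_usw_def max_usw_def by force
  then have "(\<Sum>a<n. real (card (X a))) = (\<Sum>a<n. real (card (Y a)))"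
    using usw_clean assms unfolding clean_max_usw_def max_usw_def by metis
  then show ?thesis by (metis of_nat_eq_iff of_nat_sum)
qed

lemma cm_intro:
  assumes "clean_max_usw n m v X" "allocation n m Z" "clean n v Z"
    "(\<Sum>a<n. card (Z a)) = (\<Sum>a<n. card (X a))"
  shows "clean_max_usw n m v Z"
proof -
  have "usw n v Z = usw n v X"
    using usw_clean assms unfolding clean_max_usw_def max_usw_def
    by (metis of_nat_sum)
  then show ?thesis using assms unfolding clean_max_usw_def max_usw_def by auto
qed

lemma sum_shift:
  assumes "\<forall>a<n. int (card (Z a)) = int (card (X a)) + dl k a - dl i a" "k < n" "i < n"
  shows "(\<Sum>a<n. card (Z a)) = (\<Sum>a<n. card (X a))"
proof -
  have "int (\<Sum>a<n. card (Z a)) = (\<Sum>a<n. int (card (Z a)))" by simp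
  also have "\<dots> = (\<Sum>a<n. int (card (X a)) + dl k a - dl i a)"
    using assms(1) by (intro sum.cong) auto
  also have "\<dots> = (\<Sum>a<n. int (card (X a))) + (\<Sum>a<n. dl k a) - (\<Sum>a<n. dl i a)"
    by (simp add: sum.distrib sum_subtractf)
  also have "\<dots> = (\<Sum>a<n. int (card (X a)))"
    using assms(2,3) unfolding dl_def by (simp add: sum.delta)
  finally show ?thesis by (metis of_nat_eq_iff of_nat_sum)
qed

lemma exch_aux:
  assumes Y: "clean_max_usw n m v Y"
  shows "clean_max_usw n m v X \<Longrightarrow> k < n \<Longrightarrow> card (X k) < card (Y k) \<Longrightarrow>
    (\<exists>i<n. card (X i) > card (Y i) \<and> (\<exists>Z. clean_max_usw n m v Z \<and>
        (\<forall>a<n. int (card (Z a)) = int (card (X a)) + dl k a - dl i a)))"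
proof (induction "dist_alloc n X Y" arbitrary: X k rule: less_induct)
  case less
  have aX: "allocation n m X" and cX: "clean n v X" using less.prems unfolding clean_max_usw_def max_usw_def by auto
  have aY: "allocation n m Y" and cY: "clean n v Y" using Y unfolding clean_max_usw_def max_usw_def by auto
  have Xk: "X k \<subseteq> {..<m}" using aX less.prems unfolding allocation_def by auto
  have Yk: "Y k \<subseteq> {..<m}" using aY less.prems unfolding allocation_def by auto
  have bk: "binary_submodular m (v k)" using bsv less.prems by auto
  obtain y where y: "y \<in> Y k - X k" and cy: "clean_bundle (v k) (insert y (X k))"
    using augment[OF bk _ _ Xk Yk less.prems(3)] cX cY less.prems(2) unfolding clean_def by auto
  have ym: "y < m" using y Yk by auto
  obtain j where j: "j < n" "y \<in> X j"
  proof (rule ccontr)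
    assume "\<not> thesis"
    then have ny: "\<forall>j<n. y \<notin> X j" using that by blast
    define X' where "X' = X(k := insert y (X k))"
    have "allocation n m X'" using aX ny ym less.prems(2) unfolding allocation_def X'_def by auto
    moreover have "clean n v X'" using cX cy unfolding clean_def X'_def by auto
    ultimately have "usw n v X' \<le> usw n v X" using less.prems(1) unfolding clean_max_usw_def max_usw_def by auto
    moreover have "usw n v X' = (\<Sum>a<n. real (card (X' a)))" using usw_clean \<open>allocation n m X'\<close> \<open>clean n v X'\<close> by blast
    moreover have "usw n v X = (\<Sum>a<n. real (card (X a)))" using usw_clean aX cX by blast
    moreover have "(\<Sum>a<n. real (card (X' a))) = (\<Sum>a<n. real (card (X a))) + 1"
    proof -
      have fin: "finite (X k)" using Xk finite_subset by blast
      have "(\<Sum>a<n. real (card (X' a))) = (\<Sum>a<n. real (card (X a)) + (if a = k then 1 else 0))"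
        using fin y unfolding X'_def by (intro sum.cong) auto
      also have "\<dots> = (\<Sum>a<n. real (card (X a))) + 1" using less.prems(2) by (simp add: sum.distrib)
      finally show ?thesis .
    qed
    ultimately show False by simp
  qed
  have jk: "j \<noteq> k" using j y by auto
  define X' where "X' = X(k := insert y (X k), j := X j - {y})"
  have Xj: "X j \<subseteq> {..<m}" using aX j unfolding allocation_def by auto
  have finXk: "finite (X k)" using Xk finite_subset by blast
  have finXj: "finite (X j)" using Xj finite_subset by blast
  have aX': "allocation n m X'"
  proof -
    have h1: "\<forall>a<n. a \<noteq> j \<longrightarrow> y \<notin> X a" using aX j unfolding allocation_def by blast
    have s1: "X' a - {y} \<subseteq> X a" for a unfolding X'_def by auto
    have s2: "y \<in> X' a \<Longrightarrow> a < n \<Longrightarrow> a = k" for a unfolding X'_def using h1 jk by (auto split: if_splits)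
    have sub: "\<forall>a<n. X' a \<subseteq> {..<m}" using aX ym unfolding allocation_def X'_def by auto
    have "X' a \<inter> X' b = {}" if "a < n" "b < n" "a \<noteq> b" for a b
    proof -
      have "X a \<inter> X b = {}" using aX that unfolding allocation_def by blast
      then show ?thesis using s1[of a] s1[of b] s2[of a] s2[of b] that by blast
    qed
    then show ?thesis using sub unfolding allocation_def by blast
  qed
  have cX': "clean n v X'"
  proof -
    have bj: "binary_submodular m (v j)" using bsv j by auto
    have "clean_bundle (v j) (X j - {y})" using hered[OF bj _ Xj] cX j unfolding clean_def by blast
    then show ?thesis using cX cy jk unfolding clean_def X'_def by auto
  qed
  have prof: "\<forall>a<n. int (card (X' a)) = int (card (X a)) + dl k a - dl j a"
  proof -
    have cj: "card (X j) > 0" using finXj j by (auto simp: card_gt_0_iff)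
    then show ?thesis using finXk finXj y j jk unfolding X'_def dl_def by (auto simp: card_Diff_singleton of_nat_diff)
  qed
  have cmX': "clean_max_usw n m v X'"
    using cm_intro[OF less.prems(1) aX' cX' sum_shift[OF prof less.prems(2) j(1)]] .
  show ?case
  proof (cases "card (X j) > card (Y j)")
    case True
    then show ?thesis using cmX' prof j(1) by blast
  next
    case False
    have yYj: "y \<notin> Y j" using y aY j jk less.prems(2) unfolding allocation_def by blast
    have d: "dist_alloc n X' Y < dist_alloc n X Y"
    proof -
      have sub: "X' a - Y a \<subseteq> X a - Y a" for a
      proof (cases "a = j")
        case True then show ?thesis unfolding X'_def by simp blast
      next
        case False
        show ?thesis
        proof (cases "a = k")
          case True then show ?thesis using False y unfolding X'_def by auto
        next
          case False2: False
          then show ?thesis using False unfolding X'_def by simp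
        qed
      qed
      have strict: "card (X' j - Y j) < card (X j - Y j)"
      proof -
        have "X' j - Y j = (X j - Y j) - {y}" unfolding X'_def by simp blast
        moreover have "y \<in> X j - Y j" using j yYj by auto
        moreover have "finite (X j - Y j)" using finXj by auto
        ultimately show ?thesis by (metis card_Diff1_less)
      qed
      have fa: "finite (X a)" if "a < n" for a
      proof -
        have "X a \<subseteq> {..<m}" using aX that unfolding allocation_def by blast
        then show ?thesis using finite_subset by blast
      qed
      have le: "\<forall>a\<in>{..<n}. card (X' a - Y a) \<le> card (X a - Y a)"
      proof
        fix a assume a: "a \<in> {..<n}"
        then have "finite (X a - Y a)" using fa by blast
        then show "card (X' a - Y a) \<le> card (X a - Y a)"
          using sub[of a] card_mono by blast
      qed
      have ex: "\<exists>a\<in>{..<n}. card (X' a - Y a) < card (X a - Y a)"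
        using strict j(1) by blast
      show ?thesis unfolding dist_alloc_def
        by (rule sum_strict_mono_ex1[OF _ le ex]) simp
    qed
    have "int (card (X' j)) = int (card (X j)) - 1" using prof j(1) jk unfolding dl_def by simp
    then have lt: "card (X' j) < card (Y j)" using False by simp
    obtain i Z where i: "i < n" "card (X' i) > card (Y i)" and Z: "clean_max_usw n m v Z"
      "\<forall>a<n. int (card (Z a)) = int (card (X' a)) + dl j a - dl i a"
      using less.hyps[OF d cmX' j(1) lt] by blast
    have ij: "i \<noteq> j" using i lt by auto
    have pk: "int (card (X' k)) = int (card (X k)) + 1" using prof less.prems(2) jk unfolding dl_def by simp
    have ik: "i \<noteq> k" using i pk less.prems(3) by auto
    have "int (card (X' i)) = int (card (X i))" using prof i(1) ij ik unfolding dl_def by simp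
    then have "card (X i) > card (Y i)" using i by simp
    moreover have "\<forall>a<n. int (card (Z a)) = int (card (X a)) + dl k a - dl i a"
    proof (intro allI impI)
      fix a assume a: "a < n"
      show "int (card (Z a)) = int (card (X a)) + dl k a - dl i a"
        using Z(2)[rule_format, OF a] prof[rule_format, OF a] by simp
    qed
    ultimately show ?thesis using i Z by blast
  qed
qed

end



definition f0 :: "nat list \<Rightarrow> real" where
  "f0 p = real (sum_list (map (\<lambda>x. (3::nat) ^ x) p))"

lemma f0_sym: "symmetric_crit n f0"
  unfolding symmetric_crit_def f0_def
  by (metis mset_map sum_mset_sum_list)

lemma pow3_ineq:
  fixes a b x y :: nat
  assumes "a < x" "x < b" "a < y" "y < b"
  shows "(3::nat) ^ x + 3 ^ y < 3 ^ a + 3 ^ b"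
proof -
  obtain c where c: "b = Suc c" using assms(2) by (cases b) auto
  have "(3::nat) ^ x \<le> 3 ^ c" using assms c by (intro power_increasing) auto
  moreover have "(3::nat) ^ y \<le> 3 ^ c" using assms c by (intro power_increasing) auto
  moreover have "(3::nat) ^ b = 3 * 3 ^ c" using c by simp
  moreover have "(0::nat) < 3 ^ a" by simp
  moreover have "(0::nat) < 3 ^ c" by simp
  ultimately show ?thesis by linarith
qed

lemma sum_two:
  fixes G :: "nat \<Rightarrow> nat"
  assumes "j < n" "k < n" "j \<noteq> k"
  shows "(\<Sum>i<n. G i) = G j + G k + (\<Sum>i\<in>{..<n} - {j, k}. G i)"
proof -
  have "(\<Sum>i<n. G i) = G j + (\<Sum>i\<in>{..<n} - {j}. G i)"
    using assms by (simp add: sum.remove)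
  also have "(\<Sum>i\<in>{..<n} - {j}. G i) = G k + (\<Sum>i\<in>{..<n} - {j} - {k}. G i)"
    using assms by (intro sum.remove) auto
  also have "{..<n} - {j} - {k} = {..<n} - {j, k}" by auto
  finally show ?thesis by simp
qed

lemma f0_PD: "strongly_PD n f0"
  unfolding strongly_PD_def
proof (intro allI impI)
  fix p q :: "nat list" and j k
  assume A: "length p = n \<and> length q = n \<and> j < n \<and> k < n \<and> p ! j < p ! k \<and>
        p ! j < q ! j \<and> q ! j < p ! k \<and> p ! j < q ! k \<and> q ! k < p ! k \<and>
        (\<forall>i<n. i \<noteq> j \<and> i \<noteq> k \<longrightarrow> q ! i = p ! i)"
  have jk: "j \<noteq> k" using A by auto
  have sp: "sum_list (map (\<lambda>x. (3::nat) ^ x) p) = (\<Sum>i<n. 3 ^ (p ! i))"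
    using A by (simp add: sum_list_sum_nth atLeast0LessThan)
  have sq: "sum_list (map (\<lambda>x. (3::nat) ^ x) q) = (\<Sum>i<n. 3 ^ (q ! i))"
    using A by (simp add: sum_list_sum_nth atLeast0LessThan)
  have rest: "(\<Sum>i\<in>{..<n} - {j, k}. (3::nat) ^ (q ! i)) = (\<Sum>i\<in>{..<n} - {j, k}. 3 ^ (p ! i))"
    using A by (intro sum.cong) auto
  have "(3::nat) ^ (q ! j) + 3 ^ (q ! k) < 3 ^ (p ! j) + 3 ^ (p ! k)"
    using A by (intro pow3_ineq) auto
  then have "sum_list (map (\<lambda>x. (3::nat) ^ x) q) < sum_list (map (\<lambda>x. (3::nat) ^ x) p)"
    unfolding sp sq using sum_two[of j n k "\<lambda>i. 3 ^ (p ! i)"] sum_two[of j n k "\<lambda>i. 3 ^ (q ! i)"] A jk rest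
    by simp
  then show "f0 q < f0 p" unfolding f0_def by simp
qed

lemma profile_nth: "i < n \<Longrightarrow> profile n X ! i = card (X i)"
  unfolding profile_def by simp

lemma profile_len: "length (profile n X) = n"
  unfolding profile_def by simp

context
  fixes n m :: nat and v :: "nat \<Rightarrow> nat set \<Rightarrow> real"
  assumes bsv: "\<forall>i<n. binary_submodular m (v i)"
begin

definition inB :: "(nat \<Rightarrow> int) \<Rightarrow> bool" where
  "inB g \<longleftrightarrow> (\<exists>Z. clean_max_usw n m v Z \<and> (\<forall>a<n. int (card (Z a)) = g a))"

definition inS :: "(nat \<Rightarrow> int) \<Rightarrow> bool" where
  "inS g \<longleftrightarrow> (\<exists>Z\<in>SS n m v. (\<forall>a<n. int (card (Z a)) = g a))"

lemma inS_inB: "inS g \<Longrightarrow> inB g"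
  unfolding inS_def inB_def SS_def by auto

lemma inS_nonneg: "inS g \<Longrightarrow> a < n \<Longrightarrow> g a \<ge> 0"
  unfolding inS_def by force

lemma exchB:
  assumes "inB h" "inB h'" "k < n" "h k < h' k"
  shows "\<exists>i<n. h i > h' i \<and> inB (\<lambda>a. h a + dl k a - dl i a)"
proof -
  obtain X where X: "clean_max_usw n m v X" "\<forall>a<n. int (card (X a)) = h a" using assms(1) unfolding inB_def by auto
  obtain Y where Y: "clean_max_usw n m v Y" "\<forall>a<n. int (card (Y a)) = h' a" using assms(2) unfolding inB_def by auto
  have "int (card (X k)) < int (card (Y k))" using X(2) Y(2) assms(3,4) by auto
  then have "card (X k) < card (Y k)" by simp
  then obtain i Z where i: "i < n" "card (X i) > card (Y i)" and Z: "clean_max_usw n m v Z"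
     "\<forall>a<n. int (card (Z a)) = int (card (X a)) + dl k a - dl i a"
    using exch_aux[OF bsv Y(1) X(1) assms(3)] by blast
  have "h i > h' i" using i X Y by force
  moreover have "inB (\<lambda>a. h a + dl k a - dl i a)" unfolding inB_def using Z X by auto
  ultimately show ?thesis using i by blast
qed

lemma PD_contra:
  assumes "inS h" "inB g" "a < n" "b < n" "h a \<ge> h b + 2"
    "\<forall>x<n. g x = h x - dl a x + dl b x"
  shows False
proof -
  obtain Z where Z: "Z \<in> SS n m v" "\<forall>x<n. int (card (Z x)) = h x" using assms(1) unfolding inS_def by auto
  obtain W where W: "clean_max_usw n m v W" "\<forall>x<n. int (card (W x)) = g x" using assms(2) unfolding inB_def by auto
  have ab: "a \<noteq> b" using assms(5) by auto
  let ?p = "profile n Z" and ?q = "profile n W"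
  have Wa: "int (card (W a)) = int (card (Z a)) - 1" using assms(3,6) W Z ab by (auto simp: dl_def)
  have Wb: "int (card (W b)) = int (card (Z b)) + 1" using assms(4,6) W Z ab by (auto simp: dl_def)
  have Zab: "int (card (Z a)) \<ge> int (card (Z b)) + 2" using assms(3,4,5) Z by auto
  have oth: "\<forall>i<n. i \<noteq> b \<and> i \<noteq> a \<longrightarrow> ?q ! i = ?p ! i"
  proof (intro allI impI)
    fix i assume i: "i < n" "i \<noteq> b \<and> i \<noteq> a"
    have "int (card (W i)) = int (card (Z i))" using W(2)[rule_format, OF i(1)] Z(2)[rule_format, OF i(1)] assms(6)[rule_format, OF i(1)] i by (simp add: dl_def)
    then show "?q ! i = ?p ! i" using i by (simp add: profile_nth)
  qed
  have "f0 ?q < f0 ?p"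
    using f0_PD[of n, unfolded strongly_PD_def, rule_format, of ?p ?q b a]
    using oth Wa Wb Zab assms(3,4) by (auto simp: profile_nth profile_len)
  moreover have "f0 ?p \<le> f0 ?q" using Z(1) W(1) f0_sym f0_PD unfolding SS_def by blast
  ultimately show False by simp
qed

lemma perm_S:
  assumes "inS h" "inB g" "a < n" "b < n" "h b = h a + 1"
    "\<forall>x<n. g x = h x + dl a x - dl b x"
  shows "inS g"
proof -
  obtain Z where Z: "Z \<in> SS n m v" "\<forall>x<n. int (card (Z x)) = h x" using assms(1) unfolding inS_def by auto
  obtain W where W: "clean_max_usw n m v W" "\<forall>x<n. int (card (W x)) = g x" using assms(2) unfolding inB_def by auto
  have ab: "a \<noteq> b" using assms(5) by auto
  let ?p = "profile n Z" and ?q = "profile n W"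
  have "?q = ?p[a := ?p ! b, b := ?p ! a]"
  proof (rule nth_equalityI)
    show "length ?q = length (?p[a := ?p ! b, b := ?p ! a])" by (simp add: profile_len)
  next
    fix i assume "i < length ?q"
    then have i: "i < n" by (simp add: profile_len)
    have "int (?q ! i) = int (?p[a := ?p ! b, b := ?p ! a] ! i)"
      using i assms(3,4,5,6) W Z ab
      by (auto simp: profile_nth profile_len nth_list_update dl_def)
    then show "?q ! i = ?p[a := ?p ! b, b := ?p ! a] ! i" by simp
  qed
  then have ms: "mset ?q = mset ?p" using mset_swap[of b ?p a] assms(3,4) by (simp add: profile_len)
  have "W \<in> SS n m v"
    unfolding SS_def
  proof (intro CollectI conjI allI impI W(1))
    fix f \<chi>' assume f: "symmetric_crit n f \<and> strongly_PD n f" and c: "clean_max_usw n m v \<chi>'"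
    have "f ?q = f ?p" using f ms unfolding symmetric_crit_def by (simp add: profile_len)
    also have "\<dots> \<le> f (profile n \<chi>')" using Z(1) f c unfolding SS_def by blast
    finally show "f ?q \<le> f (profile n \<chi>')" .
  qed
  then show ?thesis unfolding inS_def using W by blast
qed

end



definition Dd :: "nat \<Rightarrow> (nat \<Rightarrow> int) \<Rightarrow> (nat \<Rightarrow> int) \<Rightarrow> nat" where
  "Dd n h h' = (\<Sum>a<n. nat \<bar>h a - h' a\<bar>)"

lemma Dd_less:
  assumes "\<forall>x<n. \<bar>g x - g' x\<bar> \<le> \<bar>h x - h' x\<bar>" "j < n" "\<bar>g j - g' j\<bar> < \<bar>h j - h' j\<bar>"
  shows "Dd n g g' < Dd n h h'"
  unfolding Dd_def
proof (rule sum_strict_mono_ex1)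
  show "\<forall>x\<in>{..<n}. nat \<bar>g x - g' x\<bar> \<le> nat \<bar>h x - h' x\<bar>" using assms(1) by auto
  show "\<exists>a\<in>{..<n}. nat \<bar>g a - g' a\<bar> < nat \<bar>h a - h' a\<bar>" using assms(2,3) by force
qed simp

context
  fixes n m :: nat and v :: "nat \<Rightarrow> nat set \<Rightarrow> real"
  assumes bsv: "\<forall>i<n. binary_submodular m (v i)"
begin

lemma main_aux:
  "\<forall>h h'. inS n m v h \<longrightarrow> inS n m v h' \<longrightarrow> Dd n h h' = N \<longrightarrow> (\<forall>i<n. h i \<le> h' i + 1)"
proof (induction N rule: less_induct)
  case (less N)
  show ?case
  proof (intro allI impI)
    fix h h' i
    assume hS: "inS n m v h" and h'S: "inS n m v h'" and DN: "Dd n h h' = N" and i: "i < n"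
    show "h i \<le> h' i + 1"
    proof (rule ccontr)
      assume "\<not> h i \<le> h' i + 1"
      then have hi: "h i \<ge> h' i + 2" by simp
      have hB: "inB n m v h" using inS_inB[OF bsv hS] .
      have h'B: "inB n m v h'" using inS_inB[OF bsv h'S] .
      have IH1: "g i \<le> h' i + 1" if "inS n m v g" "Dd n g h' < Dd n h h'" for g
        using less.IH[of "Dd n g h'", rule_format, OF _ that(1) h'S refl i] that(2) DN by blast
      have IH2: "h i \<le> g i + 1" if "inS n m v g" "Dd n h g < Dd n h h'" for g
        using less.IH[of "Dd n h g", rule_format, OF _ hS that(1) refl i] that(2) DN by blast
      obtain j where j: "j < n" "h' j > h j" and jB: "inB n m v (\<lambda>a. h' a + dl i a - dl j a)"
        using exchB[OF bsv h'B hB i] hi by auto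
      have "h' j \<le> h' i + 1"
      proof (rule ccontr)
        assume "\<not> h' j \<le> h' i + 1"
        then show False
          using PD_contra[OF bsv h'S jB j(1) i] by (auto simp: dl_def)
      qed
      then have hj: "h j \<le> h i - 2" using j hi by simp
      have desc: "\<forall>j. j < n \<longrightarrow> nat (h j) = t \<longrightarrow> h j < h' j \<longrightarrow> h j \<le> h i - 2 \<longrightarrow> False" for t
      proof (induction t rule: less_induct)
        case (less t)
        show ?case
        proof (intro allI impI)
          fix j assume j: "j < n" and t: "nat (h j) = t" and jd: "h j < h' j" and ji: "h j \<le> h i - 2"
          have ij: "i \<noteq> j" using ji by auto
          obtain a where a: "a < n" "h a > h' a" and aB: "inB n m v (\<lambda>x. h x + dl j x - dl a x)"
            using exchB[OF bsv hB h'B j jd] by auto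
          have ja: "j \<noteq> a" using a jd by auto
          have "\<not> h a \<ge> h j + 2"
          proof
            assume "h a \<ge> h j + 2"
            then show False using PD_contra[OF bsv hS aB a(1) j] by (auto simp: dl_def)
          qed
          moreover have "h a \<noteq> h j + 1"
          proof
            assume e: "h a = h j + 1"
            let ?g = "\<lambda>x. h x + dl j x - dl a x"
            have gS: "inS n m v ?g" using perm_S[OF bsv hS aB j a(1) e] by auto
            have "Dd n ?g h' < Dd n h h'"
              by (rule Dd_less[where j = j]) (use j jd a ja in \<open>auto simp: dl_def\<close>)
            then have "?g i \<le> h' i + 1" using IH1 gS by blast
            moreover have "?g i = h i" using ij e ji by (auto simp: dl_def)
            ultimately show False using hi by simp
          qed
          ultimately have ahj: "h a \<le> h j" by simp
          have ai: "a \<noteq> i" using ahj ji hi by auto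
          obtain b where b: "b < n" "h' b > h b" and bB: "inB n m v (\<lambda>x. h' x + dl a x - dl b x)"
            using exchB[OF bsv h'B hB a(1)] a by auto
          have ab: "a \<noteq> b" using a b by auto
          have bi: "b \<noteq> i" using b hi by auto
          have "\<not> h' b \<ge> h' a + 2"
          proof
            assume "h' b \<ge> h' a + 2"
            then show False using PD_contra[OF bsv h'S bB b(1) a(1)] by (auto simp: dl_def)
          qed
          moreover have "h' b \<noteq> h' a + 1"
          proof
            assume e: "h' b = h' a + 1"
            let ?g = "\<lambda>x. h' x + dl a x - dl b x"
            have gS: "inS n m v ?g" using perm_S[OF bsv h'S bB a(1) b(1) e] by auto
            have "Dd n h ?g < Dd n h h'"
              by (rule Dd_less[where j = a]) (use a b ab in \<open>auto simp: dl_def\<close>)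
            then have "h i \<le> ?g i + 1" using IH2 gS by blast
            moreover have "?g i = h' i" using ai bi by (auto simp: dl_def)
            ultimately show False using hi by simp
          qed
          ultimately have "h' b \<le> h' a" by simp
          then have hb: "h b < h j" using b a ahj by simp
          have "h b \<ge> 0" using inS_nonneg[OF bsv hS b(1)] .
          then have "nat (h b) < t" using hb t by simp
          moreover have "h b < h' b" using b by simp
          moreover have "h b \<le> h i - 2" using hb ji by simp
          ultimately show False using less.IH[of "nat (h b)", rule_format, OF _ b(1) refl] by blast
        qed
      qed
      show False using desc[of "nat (h j)", rule_format, OF j(1) refl j(2) hj] .
    qed
  qed
qed

lemma main:
  "inS n m v h \<Longrightarrow> inS n m v h' \<Longrightarrow> i < n \<Longrightarrow> h i \<le> h' i + 1"
  using main_aux by blast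

end

theorem theorem5:
  fixes n m :: nat and v :: "nat \<Rightarrow> nat set \<Rightarrow> real" and \<chi> \<chi>' :: "nat \<Rightarrow> nat set"
  assumes "\<forall>i<n. binary_submodular m (v i)"
    and "\<chi> \<in> SS n m v" and "\<chi>' \<in> SS n m v"
  shows "\<forall>i<n. \<bar>int (card (\<chi> i)) - int (card (\<chi>' i))\<bar> \<le> 1"
proof (intro allI impI)
  fix i assume i: "i < n"
  have s1: "inS n m v (\<lambda>a. int (card (\<chi> a)))" unfolding inS_def[OF assms(1)] using assms(2) by blast
  have s2: "inS n m v (\<lambda>a. int (card (\<chi>' a)))" unfolding inS_def[OF assms(1)] using assms(3) by blast
  show "\<bar>int (card (\<chi> i)) - int (card (\<chi>' i))\<bar> \<le> 1"
    using main[OF assms(1) s1 s2 i] main[OF assms(1) s2 s1 i] by simp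
qed


end
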